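(* Let $q$ be a prime power, $5\le n\le q$, $\alpha_1,\dots,\alpha_n\in\mathbb{F}_q$ distinct, $u_1,\dots,u_n\in\mathbb{F}_q^*$, and $H\in\mathbb{F}_q^{4\times n}$ with $H_{ab}=u_b\alpha_b^{a-1}$ (so $\ker H$ has distance $5$). Then the number of $e\in\mathbb{F}_q^n$ with $|e|=3$ for which there exists $e'\in\mathbb{F}_q^n$ with $|e'|\le 2$ and $He'=He$ is at most $$\frac{(n-3)(n-4)}{2(q-1)^2}\cdot(q-1)^3\binom{n}{3}.$$
   Context: $|e|$ denotes the Hamming weight of $e\in\mathbb{F}_q^n$. *)

theory Defs
  imports Complex_Main "HOL-Library.Cardinality"
begin

text \<open>Vectors of F_q^n are functions nat => 'a supported on {0..<n}
  (coordinates indexed 0..n-1).\<close>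
definition vecs :: "nat \<Rightarrow> (nat \<Rightarrow> 'a::zero) set" where
  "vecs n = {e. \<forall>i. n \<le> i \<longrightarrow> e i = 0}"

definition hweight :: "nat \<Rightarrow> (nat \<Rightarrow> 'a::zero) \<Rightarrow> nat" where
  "hweight n e = card {i. i < n \<and> e i \<noteq> 0}"

definition matvec :: "nat \<Rightarrow> nat \<Rightarrow> (nat \<Rightarrow> nat \<Rightarrow> 'a::comm_semiring_1) \<Rightarrow> (nat \<Rightarrow> 'a) \<Rightarrow> (nat \<Rightarrow> 'a)" where
  "matvec m n H e = (\<lambda>a. if a < m then (\<Sum>b<n. H a b * e b) else 0)"

end

theory Submission
  imports Defs "HOL-Computational_Algebra.Polynomial"
begin

lemma vander_zero:
  fixes alpha u :: "nat \<Rightarrow> 'a::field" and v :: "nat \<Rightarrow> 'a"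
  assumes inj: "inj_on alpha {0..<n}"
    and un: "\<forall>b<n. u b \<noteq> 0"
    and P: "P \<subseteq> {..<n}" "card P \<le> 4"
    and sup: "\<forall>i. i \<notin> P \<longrightarrow> v i = 0"
    and ker: "\<forall>a<4. (\<Sum>b<n. u b * alpha b ^ a * v b) = 0"
  shows "v = (\<lambda>i. 0)"
proof
  fix j
  show "v j = 0"
  proof (cases "j \<in> P")
    case False then show ?thesis using sup by auto
  next
    case True
    have fin: "finite P" using P finite_subset by blast
    define p where "p = (\<Prod>b\<in>P-{j}. [:-alpha b, 1:])"
    have "degree p \<le> (\<Sum>b\<in>P-{j}. degree [:-alpha b, 1:])"
      unfolding p_def using degree_prod_sum_le[of "P-{j}" "\<lambda>b. [:-alpha b, 1:]"] fin
      by (simp add: o_def)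
    also have "\<dots> = card (P-{j})" by simp
    also have "\<dots> \<le> 3" using P(2) True fin by simp
    finally have dg: "degree p \<le> 3" .
    have pol: "poly p x = (\<Sum>a<4. coeff p a * x ^ a)" for x
    proof -
      have "poly p x = (\<Sum>a\<le>degree p. coeff p a * x ^ a)" by (rule poly_altdef)
      also have "\<dots> = (\<Sum>a<4. coeff p a * x ^ a)"
        by (rule sum.mono_neutral_left) (use dg in \<open>auto simp: coeff_eq_0\<close>)
      finally show ?thesis .
    qed
    have "0 = (\<Sum>a<4. coeff p a * (\<Sum>b<n. u b * alpha b ^ a * v b))"
      using ker by simp
    also have "\<dots> = (\<Sum>b<n. v b * u b * poly p (alpha b))"
      by (simp add: pol sum_distrib_left sum_distrib_right sum.swap[of _ "{..<n}"] mult_ac)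
    also have "\<dots> = (\<Sum>b\<in>P. v b * u b * poly p (alpha b))"
      by (rule sum.mono_neutral_right) (use P sup in auto)
    also have "\<dots> = v j * u j * poly p (alpha j) + (\<Sum>b\<in>P-{j}. v b * u b * poly p (alpha b))"
      using fin True by (simp add: sum.remove)
    also have "(\<Sum>b\<in>P-{j}. v b * u b * poly p (alpha b)) = 0"
    proof (rule sum.neutral, intro ballI)
      fix b assume b: "b \<in> P-{j}"
      have "poly p (alpha b) = (\<Prod>c\<in>P-{j}. alpha b - alpha c)"
        unfolding p_def poly_prod by simp
      also have "\<dots> = 0" using fin b by (intro prod_zero) auto
      finally show "v b * u b * poly p (alpha b) = 0" by simp
    qed
    finally have eq: "v j * u j * poly p (alpha j) = 0" by simp
    have "poly p (alpha j) = (\<Prod>c\<in>P-{j}. alpha j - alpha c)"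
      unfolding p_def poly_prod by simp
    also have "\<dots> \<noteq> 0"
    proof -
      have "\<forall>c\<in>P-{j}. alpha j - alpha c \<noteq> 0"
        using inj P True unfolding inj_on_def by fastforce
      then show ?thesis using fin by simp
    qed
    finally have "poly p (alpha j) \<noteq> 0" .
    moreover have "u j \<noteq> 0" using un P True by auto
    ultimately show ?thesis using eq by simp
  qed
qed


lemma dim_one:
  fixes alpha u :: "nat \<Rightarrow> 'a::field" and v w :: "nat \<Rightarrow> 'a"
  assumes inj: "inj_on alpha {0..<n}"
    and un: "\<forall>b<n. u b \<noteq> 0"
    and P: "P \<subseteq> {..<n}" "card P = 5"
    and supv: "\<forall>i. i \<notin> P \<longrightarrow> v i = 0"
    and kerv: "\<forall>a<4. (\<Sum>b<n. u b * alpha b ^ a * v b) = 0"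
    and supw: "\<forall>i. i \<notin> P \<longrightarrow> w i = 0"
    and kerw: "\<forall>a<4. (\<Sum>b<n. u b * alpha b ^ a * w b) = 0"
    and nz: "v \<noteq> (\<lambda>i. 0)"
  shows "\<exists>c. w = (\<lambda>i. c * v i)"
proof -
  obtain j where j: "v j \<noteq> 0" using nz by auto
  then have jP: "j \<in> P" using supv by auto
  have fin: "finite P" using P finite_subset by blast
  define c where "c = w j / v j"
  define z where "z = (\<lambda>i. w i - c * v i)"
  have "z = (\<lambda>i. 0)"
  proof (rule vander_zero[OF inj un, of "P - {j}"])
    show "P - {j} \<subseteq> {..<n}" using P by auto
    show "card (P - {j}) \<le> 4" using P jP fin by simp
    show "\<forall>i. i \<notin> P - {j} \<longrightarrow> z i = 0"
      using supv supw j unfolding z_def c_def by auto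
    show "\<forall>a<4. (\<Sum>b<n. u b * alpha b ^ a * z b) = 0"
    proof (intro allI impI)
      fix a :: nat assume "a < 4"
      have "(\<Sum>b<n. u b * alpha b ^ a * z b) = (\<Sum>b<n. u b * alpha b ^ a * w b) - c * (\<Sum>b<n. u b * alpha b ^ a * v b)"
        unfolding z_def by (simp add: algebra_simps sum_subtractf sum_distrib_left)
      then show "(\<Sum>b<n. u b * alpha b ^ a * z b) = 0" using kerv kerw \<open>a<4\<close> by simp
    qed
  qed
  then have "w = (\<lambda>i. c * v i)" unfolding z_def by (metis (mono_tags) eq_iff_diff_eq_0)
  then show ?thesis by blast
qed


lemma card_F:
  fixes alpha u :: "nat \<Rightarrow> 'a::{finite,field}"
  assumes inj: "inj_on alpha {0..<n}"
    and un: "\<forall>b<n. u b \<noteq> 0"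
    and P: "S \<union> T \<subseteq> {..<n}" "card (S \<union> T) = 5"
  shows "card {e \<in> vecs n. (\<forall>i. i \<notin> S \<longrightarrow> e i = 0) \<and>
     (\<exists>v. (\<forall>i. i \<notin> S \<union> T \<longrightarrow> v i = 0) \<and> (\<forall>a<4. (\<Sum>b<n. u b * alpha b ^ a * v b) = 0)
        \<and> v \<noteq> (\<lambda>i. 0) \<and> (\<forall>i\<in>S. e i = v i))} \<le> CARD('a) - 1 \<and> finite {e \<in> vecs n. (\<forall>i. i \<notin> S \<longrightarrow> e i = 0) \<and>
     (\<exists>v. (\<forall>i. i \<notin> S \<union> T \<longrightarrow> v i = 0) \<and> (\<forall>a<4. (\<Sum>b<n. u b * alpha b ^ a * v b) = 0)
        \<and> v \<noteq> (\<lambda>i. 0) \<and> (\<forall>i\<in>S. e i = v i))}"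
    (is "card ?F \<le> _ \<and> finite ?F")
proof (cases "?F = {}")
  case True show ?thesis unfolding True by simp
next
  case False
  then obtain e0 v0 where v0: "\<forall>i. i \<notin> S \<union> T \<longrightarrow> v0 i = 0"
    "\<forall>a<4. (\<Sum>b<n. u b * alpha b ^ a * v0 b) = 0" "v0 \<noteq> (\<lambda>i. 0)" by blast
  have "?F \<subseteq> (\<lambda>c. \<lambda>i. if i \<in> S then c * v0 i else 0) ` (UNIV - {0})"
  proof
    fix e assume "e \<in> ?F"
    then obtain v where e: "\<forall>i. i \<notin> S \<longrightarrow> e i = 0" and
      v: "\<forall>i. i \<notin> S \<union> T \<longrightarrow> v i = 0" "\<forall>a<4. (\<Sum>b<n. u b * alpha b ^ a * v b) = 0"
        "v \<noteq> (\<lambda>i. 0)" "\<forall>i\<in>S. e i = v i" by blast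
    obtain c where c: "v = (\<lambda>i. c * v0 i)"
      using dim_one[OF inj un P v0(1,2) v(1,2) v0(3)] by blast
    have "c \<noteq> 0" using c v(3) by auto
    moreover have "e = (\<lambda>i. if i \<in> S then c * v0 i else 0)"
      using e v(4) c by auto
    ultimately show "e \<in> (\<lambda>c. \<lambda>i. if i \<in> S then c * v0 i else 0) ` (UNIV - {0})" by blast
  qed
  then have fin: "finite ?F" by (rule finite_subset) (rule finite_imageI, rule finite)
  from \<open>?F \<subseteq> _\<close> have "card ?F \<le> card ((\<lambda>c. \<lambda>i. if i \<in> S then c * v0 i else 0) ` (UNIV - {0::'a}))"
    by (intro card_mono) (rule finite_imageI, rule finite)
  also have "\<dots> \<le> card (UNIV - {0::'a})" by (rule card_image_le) simp
  also have "\<dots> = CARD('a) - 1" by (simp add: card_Diff_singleton)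
  finally have "card ?F \<le> CARD('a) - 1" .
  then show ?thesis using fin by (rule conjI)
qed


lemma aux_arith: fixes a b r :: real assumes "r \<noteq> 0" shows "a * (b * r) = 2 * b / (2 * r^2) * r^3 * a"
  using assms by (simp add: power2_eq_square power3_eq_cube)

theorem mainTheorem10:
  fixes alpha u :: "nat \<Rightarrow> 'a::{finite,field}" and n :: nat
    and H :: "nat \<Rightarrow> nat \<Rightarrow> 'a"
  assumes "5 \<le> n" and "n \<le> CARD('a)"
    and "inj_on alpha {0..<n}"
    and "\<forall>b<n. u b \<noteq> 0"
    and "\<forall>a b. H a b = u b * alpha b ^ a"
  shows "real (card {e \<in> vecs n. hweight n e = 3 \<and>
            (\<exists>e' \<in> vecs n. hweight n e' \<le> 2 \<and> matvec 4 n H e' = matvec 4 n H e)})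
         \<le> real ((n - 3) * (n - 4)) / (2 * (real (CARD('a)) - 1)^2)
            * (real (CARD('a)) - 1)^3 * real (n choose 3)"
proof -
  note inj = assms(3) and un = assms(4) and Hdef = assms(5)
  define q where "q = CARD('a)"
  define E where "E = {e \<in> vecs n. hweight n e = 3 \<and>
            (\<exists>e' \<in> vecs n. hweight n e' \<le> 2 \<and> matvec 4 n H e' = matvec 4 n H e)}"
  define F where "F = (\<lambda>S T. {e \<in> vecs n. (\<forall>i. i \<notin> S \<longrightarrow> e i = 0) \<and>
     (\<exists>v. (\<forall>i. i \<notin> S \<union> T \<longrightarrow> v i = (0::'a)) \<and> (\<forall>a<4. (\<Sum>b<n. u b * alpha b ^ a * v b) = 0)
        \<and> v \<noteq> (\<lambda>i. 0) \<and> (\<forall>i\<in>S. e i = v i))})"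
  define S3 where "S3 = {S. S \<subseteq> {..<n} \<and> card S = 3}"
  define T2 where "T2 = (\<lambda>S. {T. T \<subseteq> {..<n} - S \<and> card T = 2})"
  have sub: "E \<subseteq> (\<Union>S\<in>S3. \<Union>T\<in>T2 S. F S T)"
  proof
    fix e assume "e \<in> E"
    then obtain e' where e: "e \<in> vecs n" "hweight n e = 3" and e': "e' \<in> vecs n" "hweight n e' \<le> 2"
      and mv: "matvec 4 n H e' = matvec 4 n H e" unfolding E_def by blast
    define S where "S = {i. i < n \<and> e i \<noteq> 0}"
    define T where "T = {i. i < n \<and> e' i \<noteq> 0}"
    have cS: "card S = 3" using e(2) unfolding S_def hweight_def by simp
    have cT: "card T \<le> 2" using e'(2) unfolding T_def hweight_def by simp
    have finS: "finite S" and finT: "finite T" unfolding S_def T_def by auto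
    define v where "v = (\<lambda>i. e i - e' i)"
    have ker: "\<forall>a<4. (\<Sum>b<n. u b * alpha b ^ a * v b) = 0"
    proof (intro allI impI)
      fix a :: nat assume a: "a < 4"
      have "(\<Sum>b<n. H a b * e' b) = (\<Sum>b<n. H a b * e b)"
        using fun_cong[OF mv, of a] a unfolding matvec_def by simp
      then show "(\<Sum>b<n. u b * alpha b ^ a * v b) = 0"
        unfolding v_def using Hdef by (simp add: algebra_simps sum_subtractf)
    qed
    have supv: "\<forall>i. i \<notin> S \<union> T \<longrightarrow> v i = 0"
      using e(1) e'(1) unfolding v_def S_def T_def vecs_def by auto
    have vnz: "v \<noteq> (\<lambda>i. 0)"
    proof
      assume "v = (\<lambda>i. 0)"
      then have vz: "v i = 0" for i by simp
      have "e = e'"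
      proof (rule ext)
        fix i show "e i = e' i" using vz[of i] unfolding v_def by simp
      qed
      then have "hweight n e = hweight n e'" by (rule arg_cong)
      then show False using e(2) e'(2) by linarith
    qed
    have STn: "S \<union> T \<subseteq> {..<n}" unfolding S_def T_def by auto
    have "card (S \<union> T) \<le> 5" using card_Un_le[of S T] cS cT by simp
    moreover have "\<not> card (S \<union> T) \<le> 4"
      using vander_zero[OF inj un STn _ supv ker] vnz by blast
    ultimately have c5: "card (S \<union> T) = 5" by simp
    have "card (S \<union> T) + card (S \<inter> T) = card S + card T"
      using card_Un_Int[OF finS finT] by simp
    then have cT2: "card T = 2" and "card (S \<inter> T) = 0" using c5 cS cT by auto
    then have disj: "S \<inter> T = {}" using finS by simp
    have "S \<in> S3" unfolding S3_def S_def using cS S_def by auto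
    moreover have "T \<in> T2 S" unfolding T2_def using cT2 disj STn by auto
    moreover have "e \<in> F S T"
      unfolding F_def
    proof (intro CollectI conjI exI)
      show "e \<in> vecs n" by fact
      show "\<forall>i. i \<notin> S \<longrightarrow> e i = 0" using e(1) unfolding S_def vecs_def by auto
      show "\<forall>i. i \<notin> S \<union> T \<longrightarrow> v i = 0" by fact
      show "\<forall>a<4. (\<Sum>b<n. u b * alpha b ^ a * v b) = 0" by fact
      show "v \<noteq> (\<lambda>i. 0)" by fact
      show "\<forall>i\<in>S. e i = v i" using disj unfolding v_def T_def S_def by auto
    qed
    ultimately show "e \<in> (\<Union>S\<in>S3. \<Union>T\<in>T2 S. F S T)" by blast
  qed
  have cardF: "card (F S T) \<le> q - 1 \<and> finite (F S T)" if "S \<in> S3" "T \<in> T2 S" for S T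
  proof -
    have "S \<union> T \<subseteq> {..<n}" using that unfolding S3_def T2_def by auto
    moreover have "card (S \<union> T) = 5"
    proof -
      have "finite S" "finite T" "S \<inter> T = {}" using that unfolding S3_def T2_def
        by (auto intro: finite_subset)
      then show ?thesis using that unfolding S3_def T2_def by (simp add: card_Un_disjoint)
    qed
    ultimately show ?thesis unfolding F_def q_def using card_F[OF inj un] by blast
  qed
  have finS3: "finite S3" unfolding S3_def by (rule finite_subset[of _ "Pow {..<n}"]) auto
  have finT2: "finite (T2 S)" for S unfolding T2_def by (rule finite_subset[of _ "Pow {..<n}"]) auto
  have cardS3: "card S3 = n choose 3" unfolding S3_def using n_subsets[of "{..<n}" 3] by simp
  have cardT2: "card (T2 S) = (n - 3) choose 2" if "S \<in> S3" for S
  proof -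
    have S1: "S \<subseteq> {..<n}" and S2: "card S = 3" using that unfolding S3_def by auto
    have "finite S" using S1 finite_subset by blast
    then have "card ({..<n} - S) = n - 3" using card_Diff_subset[OF _ S1] S2 by simp
    then show ?thesis unfolding T2_def using n_subsets[of "{..<n} - S" 2] by simp
  qed
  have finU: "finite (\<Union>S\<in>S3. \<Union>T\<in>T2 S. F S T)"
    using finS3 finT2 cardF by blast
  have "card E \<le> card (\<Union>S\<in>S3. \<Union>T\<in>T2 S. F S T)" by (rule card_mono[OF finU sub])
  also have "\<dots> \<le> (\<Sum>S\<in>S3. card (\<Union>T\<in>T2 S. F S T))" by (rule card_UN_le[OF finS3])
  also have "\<dots> \<le> (\<Sum>S\<in>S3. \<Sum>T\<in>T2 S. card (F S T))"
    by (rule sum_mono, rule card_UN_le[OF finT2])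
  also have "\<dots> \<le> (\<Sum>S\<in>S3. \<Sum>T\<in>T2 S. q - 1)"
    by (intro sum_mono) (use cardF in blast)
  also have "\<dots> = (\<Sum>S\<in>S3. ((n - 3) choose 2) * (q - 1))"
    by (intro sum.cong) (simp_all add: cardT2)
  also have "\<dots> = (n choose 3) * (((n - 3) choose 2) * (q - 1))"
    using cardS3 by simp
  finally have bound: "card E \<le> (n choose 3) * (((n - 3) choose 2) * (q - 1))" .
  have q5: "q \<ge> 5" using assms(1,2) unfolding q_def by simp
  have ch2: "2 * ((n - 3) choose 2) = (n - 3) * (n - 4)"
  proof -
    have "even ((n - 3) * (n - 3 - 1))" by simp
    then have "2 * ((n - 3) choose 2) = (n - 3) * (n - 3 - 1)"
      unfolding choose_two by (rule even_two_times_div_two)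
    moreover have "n - 3 - 1 = n - 4" by simp
    ultimately show ?thesis by simp
  qed
  have "real (card E) \<le> real ((n choose 3) * (((n - 3) choose 2) * (q - 1)))"
    using bound by (simp only: of_nat_le_iff)
  also have "\<dots> = real (n choose 3) * (real ((n - 3) choose 2) * (real q - 1))"
    using q5 by (simp add: of_nat_diff)
  also have "\<dots> = real ((n - 3) * (n - 4)) / (2 * (real q - 1)^2) * (real q - 1)^3 * real (n choose 3)"
  proof -
    have r: "real q - 1 \<noteq> 0" using q5 by simp
    have h: "real ((n - 3) * (n - 4)) = 2 * real ((n - 3) choose 2)"
      using ch2 by (metis of_nat_mult of_nat_numeral)
    show ?thesis unfolding h by (rule aux_arith[OF r])
  qed
  finally show ?thesis unfolding E_def q_def .
qed

end
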